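(* Let $\{(\mathbf{x}^k,\mathbf{r}^k,\boldsymbol{\lambda}^k)\}$ be generated by Algorithm 1 and $k\ge 0$. Then for any $\mathbf{x}$ independent of $i_k$ with $\mathbf{A}\mathbf{x}=\mathbf{b}$, $$\begin{aligned}&\mathbb{E}_{i_k}\Big[F(\mathbf{x}^{k+1})-F(\mathbf{x})-\langle\boldsymbol{\lambda}^{k+1},\mathbf{r}^{k+1}\rangle+(\beta-\rho)\|\mathbf{r}^{k+1}\|^2-\tfrac{\beta}{2}\|\mathbf{r}^{k+1}\|^2\Big]+\tfrac12\mathbb{E}_{i_k}\Big[\|\mathbf{x}^{k+1}-\mathbf{x}\|_{\mathbf{P}}^2+\|\mathbf{x}^{k+1}-\mathbf{x}^k\|_{\mathbf{P}-\mathbf{L}-\beta\mathbf{A}^\top\mathbf{A}}^2\Big]\\ &\le\Big(1-\frac1m\Big)\Big[F(\mathbf{x}^k)-F(\mathbf{x})-\langle\boldsymbol{\lambda}^k,\mathbf{r}^k\rangle+\beta\|\mathbf{r}^k\|^2\Big]-\tfrac{\beta}{2}\|\mathbf{r}^k\|^2+\tfrac12\|\mathbf{x}^k-\mathbf{x}\|_{\mathbf{P}}^2,\end{aligned}$$ where $\mathbf{P}=\mathrm{blkdiag}(\mathbf{P}_1,\ldots,\mathbf{P}_m)$ (here $\|\mathbf{z}\|_{\mathbf{M}}^2:=\mathbf{z}^\top\mathbf{M}\mathbf{z}$ for any symmetric $\mathbf{M}$).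
   Context: Problem: $\min_{\mathbf{x}} F(\mathbf{x}):=f(\mathbf{x})+g(\mathbf{x})$ s.t. $\mathbf{A}\mathbf{x}=\mathbf{b}$, where $\mathbf{x}=(\mathbf{x}_1;\ldots;\mathbf{x}_m)$ with blocks $\mathbf{x}_i\in\mathbb{R}^{n_i}$, $g(\mathbf{x})=\sum_{i=1}^m g_i(\mathbf{x}_i)$, $\mathbf{A}=[\mathbf{A}_1,\ldots,\mathbf{A}_m]$ with $\mathbf{A}_i\in\mathbb{R}^{q\times n_i}$, $\mathbf{b}\in\mathbb{R}^q$; $f$ is convex and continuously differentiable, each $g_i$ is proper, convex, lower semicontinuous. $\nabla_i f$ denotes the partial gradient w.r.t. block $i$; $\mathbf{U}_i\mathbf{y}$ denotes the vector whose $i$-th block is $\mathbf{y}_i$ and other blocks zero. Assumption (gradient Lipschitz continuity): there are constants $L_i>0$ and $L_r$ with $\|\nabla_i f(\mathbf{x}+\mathbf{U}_i\mathbf{y})-\nabla_i f(\mathbf{x})\|\le L_i\|\mathbf{y}_i\|$ and $\|\nabla f(\mathbf{x}+\mathbf{U}_i\mathbf{y})-\nabla f(\mathbf{x})\|\le L_r\|\mathbf{y}_i\|$ for all $i,\mathbf{x},\mathbf{y}$. $\mathbf{L}=\mathrm{blkdiag}(L_1\mathbf{I}_{n_1},\ldots,L_m\mathbf{I}_{n_m})$. Algorithm 1 (randomized primal-dual block update): choose $\mathbf{x}^0$, set $\boldsymbol{\lambda}^0=\mathbf{0}$, $\mathbf{r}^0=\mathbf{A}\mathbf{x}^0-\mathbf{b}$,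 parameters $\beta>0,\rho>0$, symmetric PSD matrices $\mathbf{P}_i\in\mathbb{R}^{n_i\times n_i}$. For $k=0,1,\ldots$: pick $i_k\in\{1,\ldots,m\}$ uniformly at random, independent of $i_0,\ldots,i_{k-1}$; set $\mathbf{x}_i^{k+1}=\mathbf{x}_i^k$ for $i\ne i_k$ and $$\mathbf{x}_{i_k}^{k+1}\in\arg\min_{\mathbf{x}_{i_k}}\big\langle\nabla_{i_k} f(\mathbf{x}^k)-\mathbf{A}_{i_k}^\top(\boldsymbol{\lambda}^k-\beta\mathbf{r}^k),\mathbf{x}_{i_k}\big\rangle+g_{i_k}(\mathbf{x}_{i_k})+\tfrac12\|\mathbf{x}_{i_k}-\mathbf{x}_{i_k}^k\|_{\mathbf{P}_{i_k}}^2;$$ then $\mathbf{r}^{k+1}=\mathbf{r}^k+\mathbf{A}_{i_k}(\mathbf{x}_{i_k}^{k+1}-\mathbf{x}_{i_k}^k)$ (so $\mathbf{r}^k=\mathbf{A}\mathbf{x}^k-\mathbf{b}$) and $\boldsymbol{\lambda}^{k+1}=\boldsymbol{\lambda}^k-\rho\mathbf{r}^{k+1}$. $\mathbb{E}_{i_k}$ denotes expectation over $i_k$ conditional on $i_0,\ldots,i_{k-1}$; "$\mathbf{x}$ independent of $i_k$" means $\mathbf{x}$ is determined by $i_0,\ldots,i_{k-1}$ (e.g. deterministic). *)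

theory Defs
  imports "HOL-Analysis.Analysis"
begin

text \<open>Block structure: coordinates of the ambient space real^'n are partitioned into
  blocks 0..m-1 by a map blk.  U_i y keeps the i-th block of y and zeroes the rest.\<close>
definition blkU :: "('n \<Rightarrow> nat) \<Rightarrow> nat \<Rightarrow> real^'n \<Rightarrow> real^'n" where
  "blkU blk i y = (\<chi> j. if blk j = i then y $ j else 0)"

definition qnorm :: "real^'n^'n \<Rightarrow> real^'n \<Rightarrow> real" where
  "qnorm M z = z \<bullet> (M *v z)"

definition Lmat :: "('n \<Rightarrow> nat) \<Rightarrow> (nat \<Rightarrow> real) \<Rightarrow> real^'n^'n" where
  "Lmat blk Lv = (\<chi> a b. if a = b then Lv (blk a) else 0)"

definition ereal_convex :: "(real^'n \<Rightarrow> ereal) \<Rightarrow> bool" where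
  "ereal_convex g \<longleftrightarrow> (\<forall>x y t. 0 \<le> t \<and> t \<le> 1 \<longrightarrow>
      g ((1 - t) *\<^sub>R x + t *\<^sub>R y) \<le> ereal (1 - t) * g x + ereal t * g y)"

definition ereal_lsc :: "(real^'n \<Rightarrow> ereal) \<Rightarrow> bool" where
  "ereal_lsc g \<longleftrightarrow> (\<forall>x. g x \<le> Liminf (at x) g)"

definition ereal_proper :: "(real^'n \<Rightarrow> ereal) \<Rightarrow> bool" where
  "ereal_proper g \<longleftrightarrow> (\<forall>x. g x \<noteq> -\<infinity>) \<and> (\<exists>x. g x \<noteq> \<infinity>)"

text \<open>A function of the full vector that depends only on block i (i.e. g_i(x_i)).\<close>
definition depends_only_on_block :: "('n \<Rightarrow> nat) \<Rightarrow> nat \<Rightarrow> (real^'n \<Rightarrow> 'b) \<Rightarrow> bool" where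
  "depends_only_on_block blk i h \<longleftrightarrow>
     (\<forall>x y. (\<forall>j. blk j = i \<longrightarrow> x $ j = y $ j) \<longrightarrow> h x = h y)"

end

theory Submission
  imports Defs
begin


lemma line_deriv:
  fixes f :: "real^'n::finite \<Rightarrow> real"
  assumes "\<forall>y. GDERIV f y :> grad y"
  shows "((\<lambda>t. f (a + t *\<^sub>R d)) has_real_derivative (grad (a + t *\<^sub>R d) \<bullet> d)) (at t)"
proof -
  have 1: "((\<lambda>t. a + t *\<^sub>R d) has_derivative (\<lambda>s. s *\<^sub>R d)) (at t)"
    by (auto intro!: derivative_eq_intros)
  have 2: "(f has_derivative (\<lambda>h. h \<bullet> grad (a + t *\<^sub>R d))) (at (a + t *\<^sub>R d))"
    using assms by (simp add: gderiv_def)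
  have "((\<lambda>t. f (a + t *\<^sub>R d)) has_derivative (\<lambda>s. (s *\<^sub>R d) \<bullet> grad (a + t *\<^sub>R d))) (at t)"
    using diff_chain_at[OF 1 2] by (simp add: o_def)
  then show ?thesis
    by (simp add: has_field_derivative_def mult.commute inner_commute mult_commute_abs)
qed

lemma descent:
  fixes f :: "real^'n::finite \<Rightarrow> real"
  assumes fg: "\<forall>y. GDERIV f y :> grad y"
    and lip: "\<And>t. 0 \<le> t \<Longrightarrow> t \<le> 1 \<Longrightarrow> (grad (a + t *\<^sub>R d) - grad a) \<bullet> d \<le> Lc * t * (norm d)\<^sup>2"
  shows "f (a + d) \<le> f a + grad a \<bullet> d + Lc / 2 * (norm d)\<^sup>2"
proof -
  define \<phi> where "\<phi> t = f (a + t *\<^sub>R d) - t * (grad a \<bullet> d) - Lc / 2 * t\<^sup>2 * (norm d)\<^sup>2" for t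
  have "\<phi> 1 \<le> \<phi> 0"
  proof (rule DERIV_nonpos_imp_nonincreasing[of 0 1])
    fix t :: real assume t: "0 \<le> t" "t \<le> 1"
    have "(\<phi> has_real_derivative (grad (a + t *\<^sub>R d) \<bullet> d - grad a \<bullet> d - Lc / 2 * (2 * t) * (norm d)\<^sup>2)) (at t)"
      unfolding \<phi>_def
      by (rule line_deriv[OF fg] derivative_eq_intros refl | simp)+
    moreover have "grad (a + t *\<^sub>R d) \<bullet> d - grad a \<bullet> d - Lc / 2 * (2 * t) * (norm d)\<^sup>2 \<le> 0"
      using lip[OF t] by (simp add: inner_diff_left)
    ultimately show "\<exists>y. DERIV \<phi> t :> y \<and> y \<le> 0" by blast
  qed simp
  then show ?thesis by (simp add: \<phi>_def)
qed

lemma tangent: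
  fixes f :: "real^'n::finite \<Rightarrow> real"
  assumes fg: "\<forall>y. GDERIV f y :> grad y" and cv: "convex_on UNIV f"
  shows "f x - f a \<ge> grad a \<bullet> (x - a)"
proof -
  define \<psi> where "\<psi> t = f (a + t *\<^sub>R (x - a))" for t
  have c: "convex_on UNIV \<psi>"
    unfolding convex_on_def \<psi>_def
  proof (intro conjI allI impI ballI, simp)
    fix s t u v :: real assume "0 \<le> u" "0 \<le> v" "u + v = 1"
    have "a + (u * s + v * t) *\<^sub>R (x - a) = u *\<^sub>R (a + s *\<^sub>R (x - a)) + v *\<^sub>R (a + t *\<^sub>R (x - a))"
      using \<open>u + v = 1\<close> by (simp add: algebra_simps flip: scaleR_add_left)
    then show "f (a + (u *\<^sub>R s + v *\<^sub>R t) *\<^sub>R (x - a)) \<le> u * f (a + s *\<^sub>R (x - a)) + v * f (a + t *\<^sub>R (x - a))"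
      using cv \<open>0 \<le> u\<close> \<open>0 \<le> v\<close> \<open>u + v = 1\<close> by (simp add: convex_on_def)
  qed
  have d: "(\<psi> has_field_derivative (grad a \<bullet> (x - a))) (at 0 within UNIV)"
    unfolding \<psi>_def using line_deriv[OF fg, of a "x - a" 0] by simp
  have "\<psi> 1 - \<psi> 0 \<ge> (grad a \<bullet> (x - a)) * (1 - 0)"
    by (rule convex_on_imp_above_tangent[OF c]) (use d in auto)
  then show ?thesis by (simp add: \<psi>_def)
qed



lemma inner_transpose:
  fixes A :: "real^'n::finite^'q::finite"
  shows "(transpose A *v w) \<bullet> v = w \<bullet> (A *v v)"
  by (simp add: inner_vec_def matrix_vector_mult_def transpose_def sum_distrib_left
      sum_distrib_right mult_ac vector_matrix_mult_def) (rule sum.swap)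

lemma sym_inner:
  fixes P :: "real^'n::finite^'n"
  assumes "transpose P = P"
  shows "(P *v u) \<bullet> w = u \<bullet> (P *v w)"
  using inner_transpose[of P u w] assms by simp

lemma qnorm_expand:
  fixes P :: "real^'n::finite^'n"
  assumes "transpose P = P"
  shows "qnorm P (u + t *\<^sub>R w) = qnorm P u + 2 * t * ((P *v u) \<bullet> w) + t\<^sup>2 * qnorm P w"
proof -
  have "qnorm P (u + t *\<^sub>R w) = u \<bullet> (P *v u) + t * (u \<bullet> (P *v w)) + t * (w \<bullet> (P *v u)) + t\<^sup>2 * (w \<bullet> (P *v w))"
    by (simp add: qnorm_def matrix_vector_right_distrib matrix_vector_mult_scaleR
        inner_add_left inner_add_right power2_eq_square algebra_simps)
  moreover have "u \<bullet> (P *v w) = (P *v u) \<bullet> w" "w \<bullet> (P *v u) = (P *v u) \<bullet> w"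
    using sym_inner[OF assms, of u w] by (auto simp: inner_commute)
  ultimately show ?thesis by (simp add: qnorm_def)
qed

lemma small_t:
  fixes K Q :: real
  assumes "\<And>t. 0 < t \<Longrightarrow> t \<le> 1 \<Longrightarrow> 0 \<le> t * K + t\<^sup>2 * Q"
  shows "0 \<le> K"
proof (rule ccontr)
  assume "\<not> 0 \<le> K"
  define t where "t = min 1 (- K / (2 * (\<bar>Q\<bar> + 1)))"
  have t: "0 < t" "t \<le> 1" using \<open>\<not> 0 \<le> K\<close> proof -
    have "0 < - K / (2 * (\<bar>Q\<bar> + 1))" using \<open>\<not> 0 \<le> K\<close> by (intro divide_pos_pos) auto
    then show "0 < t" "t \<le> 1" by (auto simp: t_def)
  qed
  have "t * (\<bar>Q\<bar> + 1) \<le> - K / 2"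
  proof -
    have "t \<le> - K / (2 * (\<bar>Q\<bar> + 1))" by (simp add: t_def)
    then have "t * (\<bar>Q\<bar> + 1) \<le> - K / (2 * (\<bar>Q\<bar> + 1)) * (\<bar>Q\<bar> + 1)"
      by (intro mult_right_mono) auto
    also have "\<dots> = - K / 2" by (simp add: field_simps)
    finally show ?thesis .
  qed
  moreover have "t * Q \<le> t * (\<bar>Q\<bar> + 1)" using t by (intro mult_left_mono) auto
  ultimately have "K + t * Q < 0" using \<open>\<not> 0 \<le> K\<close> by linarith
  then have "t * (K + t * Q) < 0" using t by (simp add: mult_pos_neg)
  then have "t * K + t\<^sup>2 * Q < 0" by (simp add: power2_eq_square algebra_simps)
  with assms[OF t] show False by simp
qed

lemma three_point:
  fixes gi :: "real^'n::finite \<Rightarrow> ereal" and P :: "real^'n^'n"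
  assumes conv: "ereal_convex gi" and gprop: "\<forall>v. gi v \<noteq> -\<infinity>"
    and argmin: "\<forall>v. (\<forall>j. blk j \<noteq> i \<longrightarrow> v $ j = xk $ j) \<longrightarrow>
        ereal (c \<bullet> z + qnorm P (z - xk) / 2) + gi z \<le> ereal (c \<bullet> v + qnorm P (v - xk) / 2) + gi v"
    and zoff: "\<forall>j. blk j \<noteq> i \<longrightarrow> z $ j = xk $ j"
    and yoff: "\<forall>j. blk j \<noteq> i \<longrightarrow> y $ j = xk $ j"
    and Psym: "transpose P = P" and gy: "gi y \<noteq> \<infinity>"
  shows "gi z \<noteq> \<infinity> \<and> c \<bullet> z + real_of_ereal (gi z) + (P *v (z - xk)) \<bullet> (z - y) \<le> c \<bullet> y + real_of_ereal (gi y)"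
proof -
  define Gy where "Gy = real_of_ereal (gi y)"
  have gyE: "gi y = ereal Gy" using gy gprop Gy_def by (cases "gi y") auto
  have "ereal (c \<bullet> z + qnorm P (z - xk) / 2) + gi z \<le> ereal (c \<bullet> y + qnorm P (y - xk) / 2) + gi y"
    using argmin yoff by blast
  then have gz: "gi z \<noteq> \<infinity>" using gyE by auto
  define Gz where "Gz = real_of_ereal (gi z)"
  have gzE: "gi z = ereal Gz" using gz gprop Gz_def by (cases "gi z") auto
  define u where "u = z - xk"
  define w where "w = y - z"
  define K where "K = c \<bullet> y + Gy - c \<bullet> z - Gz - (P *v u) \<bullet> (z - y)"
  have "0 \<le> K"
  proof (rule small_t[where Q = "qnorm P w / 2"])
    fix t :: real assume t: "0 < t" "t \<le> 1"
    define yt where "yt = (1 - t) *\<^sub>R z + t *\<^sub>R y"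
    have ytoff: "\<forall>j. blk j \<noteq> i \<longrightarrow> yt $ j = xk $ j"
      using zoff yoff by (auto simp: yt_def algebra_simps)
    have "gi yt \<le> ereal (1 - t) * gi z + ereal t * gi y"
      using conv t unfolding ereal_convex_def yt_def by auto
    also have "\<dots> = ereal ((1 - t) * Gz + t * Gy)" using gzE gyE by simp
    finally have gyt: "gi yt \<le> ereal ((1 - t) * Gz + t * Gy)" .
    have "ereal (c \<bullet> z + qnorm P (z - xk) / 2) + gi z \<le> ereal (c \<bullet> yt + qnorm P (yt - xk) / 2) + gi yt"
      using argmin ytoff by blast
    also have "\<dots> \<le> ereal (c \<bullet> yt + qnorm P (yt - xk) / 2) + ereal ((1 - t) * Gz + t * Gy)"
      using add_left_mono[OF gyt, of "ereal (c \<bullet> yt + qnorm P (yt - xk) / 2)"] by simp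
    finally have R: "c \<bullet> z + qnorm P u / 2 + Gz \<le> c \<bullet> yt + qnorm P (yt - xk) / 2 + ((1 - t) * Gz + t * Gy)"
      using gzE u_def by simp
    have e1: "yt - xk = u + t *\<^sub>R w" by (simp add: yt_def u_def w_def algebra_simps)
    have e2: "c \<bullet> yt = c \<bullet> z + t * (c \<bullet> w)" by (simp add: yt_def w_def algebra_simps inner_diff_right inner_add_right)
    have e3: "(P *v u) \<bullet> (z - y) = - ((P *v u) \<bullet> w)" by (simp add: w_def inner_diff_right)
    have "0 \<le> t * (c \<bullet> w + Gy - Gz + (P *v u) \<bullet> w) + t\<^sup>2 * (qnorm P w / 2)"
      using R unfolding e1 e2 qnorm_expand[OF Psym] by (simp add: field_simps)
    then show "0 \<le> t * K + t\<^sup>2 * (qnorm P w / 2)"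
      unfolding K_def e3 by (simp add: w_def inner_diff_right algebra_simps)
  qed
  then show ?thesis using gz unfolding K_def u_def Gz_def Gy_def by simp
qed



lemma blkU_nth[simp]: "blkU blk i y $ j = (if blk j = i then y $ j else 0)"
  by (simp add: blkU_def)

lemma blkU_supported: "\<forall>j. blk j \<noteq> i \<longrightarrow> d $ j = 0 \<Longrightarrow> blkU blk i d = d"
  by (auto simp: vec_eq_iff)

lemma blkU_diff: "blkU blk i (a - b) = blkU blk i a - blkU blk i b"
  by (auto simp: vec_eq_iff)

lemma blkU_add: "blkU blk i (a + b) = blkU blk i a + blkU blk i b"
  by (auto simp: vec_eq_iff)

lemma blkU_idem[simp]: "blkU blk i (blkU blk i a) = blkU blk i a"
  by (auto simp: vec_eq_iff)

lemma blkU_scale: "blkU blk i (t *\<^sub>R a) = t *\<^sub>R blkU blk i a"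
  by (auto simp: vec_eq_iff)

lemma inner_blkU: "(blkU blk i v) \<bullet> w = v \<bullet> (blkU blk i (w :: real^'n::finite))"
  unfolding inner_vec_def by (rule sum.cong) auto

lemma inner_blkU_supp:
  "\<forall>j. blk j \<noteq> i \<longrightarrow> d $ j = 0 \<Longrightarrow> v \<bullet> d = (blkU blk i v) \<bullet> (d :: real^'n::finite)"
  by (simp add: inner_blkU blkU_supported)

lemma sum_blkU:
  assumes "\<forall>j. blk j < m"
  shows "(\<Sum>i<m. blkU blk i v) = (v :: real^'n::finite)"
unfolding vec_eq_iff
proof
  fix j
  have "(\<Sum>i<m. blkU blk i v) $ j = (\<Sum>i<m. (if blk j = i then v $ j else 0))"
    by (simp add: sum_component)
  also have "\<dots> = v $ j" using assms by (simp add: sum.delta)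
  finally show "(\<Sum>i<m. blkU blk i v) $ j = v $ j" .
qed

lemma qnorm_Lmat:
  assumes "\<forall>j. blk j \<noteq> i \<longrightarrow> d $ j = 0"
  shows "qnorm (Lmat blk Lv) (d :: real^'n::finite) = Lv i * (norm d)\<^sup>2"
proof -
  have "Lmat blk Lv *v d = Lv i *\<^sub>R d"
  proof (unfold vec_eq_iff, intro allI)
    fix a
    have "(Lmat blk Lv *v d) $ a = (\<Sum>c\<in>UNIV. (if a = c then Lv (blk a) else 0) * d $ c)"
      by (simp add: Lmat_def matrix_vector_mult_def)
    also have "\<dots> = (\<Sum>c\<in>UNIV. (if a = c then Lv (blk a) * d $ c else 0))"
      by (rule sum.cong) auto
    also have "\<dots> = Lv (blk a) * d $ a" by (simp add: sum.delta)
    also have "\<dots> = (Lv i *\<^sub>R d) $ a" using assms by (cases "blk a = i") auto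
    finally show "(Lmat blk Lv *v d) $ a = (Lv i *\<^sub>R d) $ a" .
  qed
  then show ?thesis by (simp add: qnorm_def power2_norm_eq_inner)
qed

lemma P_supp:
  fixes P :: "real^'n::finite^'n"
  assumes "\<forall>a c. blk a \<noteq> blk c \<longrightarrow> P $ a $ c = 0" "\<forall>j. blk j \<noteq> i \<longrightarrow> d $ j = 0"
  shows "\<forall>j. blk j \<noteq> i \<longrightarrow> (P *v d) $ j = 0"
  using assms by (auto simp: matrix_vector_mult_def intro!: sum.neutral) (metis mult_eq_0_iff)

lemma qnorm_AtA:
  fixes A :: "real^'n::finite^'q::finite"
  shows "qnorm (transpose A ** A) d = (norm (A *v d))\<^sup>2"
  by (simp add: qnorm_def power2_norm_eq_inner flip: matrix_vector_mul_assoc)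
     (metis inner_commute inner_transpose transpose_matrix_vector)

lemma scaleR_mat_vec: "((c::real) *\<^sub>R M) *v (d::real^'n::finite) = c *\<^sub>R (M *v d)"
  by (auto simp: vec_eq_iff matrix_vector_mult_def sum_distrib_left mult.assoc)

lemma qnorm_lin:
  "qnorm (M1 - M2 - (c::real) *\<^sub>R M3) (d::real^'n::finite) = qnorm M1 d - qnorm M2 d - c * qnorm M3 d"
  by (simp add: qnorm_def matrix_vector_mult_diff_rdistrib scaleR_mat_vec inner_diff_right)



theorem mainTheorem4:
  fixes m :: nat and blk :: "'n::finite \<Rightarrow> nat"
    and f :: "real^'n \<Rightarrow> real" and grad :: "real^'n \<Rightarrow> real^'n"
    and g :: "nat \<Rightarrow> real^'n \<Rightarrow> ereal"
    and A :: "real^'n^'q::finite" and b :: "real^'q"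
    and Lv :: "nat \<Rightarrow> real" and Lr :: "real"
    and P :: "real^'n^'n" and \<beta> \<rho> :: real
    and X :: "nat list \<Rightarrow> real^'n" and R :: "nat list \<Rightarrow> real^'q"
    and lam :: "nat list \<Rightarrow> real^'q"
    and hs :: "nat list" and x :: "real^'n"
  assumes blk_range: "\<forall>j. blk j < m"
    and blk_nonempty: "\<forall>i<m. \<exists>j. blk j = i"
    and f_convex: "convex_on UNIV f"
    and f_grad: "\<forall>y. GDERIV f y :> grad y"
    and grad_cont: "continuous_on UNIV grad"
    and g_block: "\<forall>i<m. depends_only_on_block blk i (g i)"
    and g_proper: "\<forall>i<m. ereal_proper (g i)"
    and g_convex: "\<forall>i<m. ereal_convex (g i)"
    and g_lsc: "\<forall>i<m. ereal_lsc (g i)"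
    and L_pos: "\<forall>i<m. Lv i > 0"
    and Lip_i: "\<forall>i<m. \<forall>y z. norm (blkU blk i (grad (y + blkU blk i z) - grad y))
                         \<le> Lv i * norm (blkU blk i z)"
    and Lip_r: "\<forall>i<m. \<forall>y z. norm (grad (y + blkU blk i z) - grad y) \<le> Lr * norm (blkU blk i z)"
    and \<beta>_pos: "\<beta> > 0" and \<rho>_pos: "\<rho> > 0"
    and P_blockdiag: "\<forall>a c. blk a \<noteq> blk c \<longrightarrow> P $ a $ c = 0"
    and P_sym: "transpose P = P"
    and P_psd: "\<forall>i<m. \<forall>y. (\<forall>j. blk j \<noteq> i \<longrightarrow> y $ j = 0) \<longrightarrow> 0 \<le> y \<bullet> (P *v y)"
    and lam_init: "lam [] = 0"
    and R_init: "R [] = A *v X [] - b"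
    and X_keep: "\<forall>ks i. set ks \<subseteq> {..<m} \<and> i < m \<longrightarrow>
                   (\<forall>j. blk j \<noteq> i \<longrightarrow> X (ks @ [i]) $ j = X ks $ j)"
    and X_argmin: "\<forall>ks i. set ks \<subseteq> {..<m} \<and> i < m \<longrightarrow>
        (\<forall>y. (\<forall>j. blk j \<noteq> i \<longrightarrow> y $ j = X ks $ j) \<longrightarrow>
          ereal (blkU blk i (grad (X ks) - transpose A *v (lam ks - \<beta> *\<^sub>R R ks)) \<bullet> X (ks @ [i])
                 + qnorm P (X (ks @ [i]) - X ks) / 2) + g i (X (ks @ [i]))
          \<le> ereal (blkU blk i (grad (X ks) - transpose A *v (lam ks - \<beta> *\<^sub>R R ks)) \<bullet> y
                 + qnorm P (y - X ks) / 2) + g i y)"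
    and R_step: "\<forall>ks i. set ks \<subseteq> {..<m} \<and> i < m \<longrightarrow>
                   R (ks @ [i]) = R ks + A *v (X (ks @ [i]) - X ks)"
    and lam_step: "\<forall>ks i. set ks \<subseteq> {..<m} \<and> i < m \<longrightarrow>
                   lam (ks @ [i]) = lam ks - \<rho> *\<^sub>R R (ks @ [i])"
    and hs_valid: "set hs \<subseteq> {..<m}"
    and x_feas: "A *v x = b"
    and Fx_finite: "(\<Sum>i<m. g i x) \<noteq> \<infinity>"
  shows
    "ereal (1 / real m) *
       (\<Sum>i<m. (ereal (f (X (hs @ [i]))) + (\<Sum>l<m. g l (X (hs @ [i]))))
                 - (ereal (f x) + (\<Sum>l<m. g l x))
                 + ereal (- (lam (hs @ [i]) \<bullet> R (hs @ [i]))
                          + (\<beta> - \<rho>) * (norm (R (hs @ [i])))\<^sup>2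
                          - \<beta> / 2 * (norm (R (hs @ [i])))\<^sup>2))
     + ereal (1 / 2 * ((1 / real m) *
         (\<Sum>i<m. qnorm P (X (hs @ [i]) - x)
                 + qnorm (P - Lmat blk Lv - \<beta> *\<^sub>R (transpose A ** A)) (X (hs @ [i]) - X hs))))
     \<le> ereal (1 - 1 / real m) *
         ((ereal (f (X hs)) + (\<Sum>l<m. g l (X hs))) - (ereal (f x) + (\<Sum>l<m. g l x))
          + ereal (- (lam hs \<bullet> R hs) + \<beta> * (norm (R hs))\<^sup>2))
       + ereal (- \<beta> / 2 * (norm (R hs))\<^sup>2 + 1 / 2 * qnorm P (X hs - x))"
  proof -
  define xk where "xk = X hs"
  define r where "r = R hs"
  define l0 where "l0 = lam hs"
  define z where "z i = X (hs @ [i])" for i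
  define d where "d i = z i - xk" for i
  define s where "s i = R (hs @ [i])" for i
  define ln where "ln i = lam (hs @ [i])" for i
  define M where "M = P - Lmat blk Lv - \<beta> *\<^sub>R (transpose A ** A)"
  define c where "c = grad xk - transpose A *v (l0 - \<beta> *\<^sub>R r)"
  define gr where "gr l v = real_of_ereal (g l v)" for l v
  have Rinv: "set ks \<subseteq> {..<m} \<Longrightarrow> R ks = A *v X ks - b" for ks
  proof (induction ks rule: rev_induct)
    case Nil then show ?case using R_init by simp
  next
    case (snoc i ks)
    then show ?case using R_step[rule_format, of ks i]
      by (simp add: matrix_vector_mult_diff_distrib)
  qed
  have r_eq: "r = A *v (xk - x)"
    using Rinv[OF hs_valid] x_feas by (simp add: r_def xk_def matrix_vector_mult_diff_distrib)
  have s_eq: "s i = r + A *v d i" if "i < m" for i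
    using R_step hs_valid that by (simp add: s_def r_def d_def z_def xk_def)
  have ln_eq: "ln i = l0 - \<rho> *\<^sub>R s i" if "i < m" for i
    using lam_step hs_valid that by (simp add: s_def ln_def l0_def)
  have zoff: "\<forall>j. blk j \<noteq> i \<longrightarrow> z i $ j = xk $ j" if "i < m" for i
    using X_keep hs_valid that by (simp add: z_def xk_def)
  have dsupp: "\<forall>j. blk j \<noteq> i \<longrightarrow> d i $ j = 0" if "i < m" for i
    using zoff[OF that] by (simp add: d_def)
  have gninf: "g l v \<noteq> -\<infinity>" if "l < m" for l v
    using g_proper that by (simp add: ereal_proper_def)
  have gx_fin: "g l x \<noteq> \<infinity>" if "l < m" for l
    using Fx_finite that sum_Pinfty[of "\<lambda>l. g l x" "{..<m}"] by auto
  have key: "g i (z i) \<noteq> \<infinity> \<and>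
      f (z i) - f x + gr i (z i) - gr i x
      + (- (ln i \<bullet> s i) + (\<beta> - \<rho>) * (norm (s i))\<^sup>2 - \<beta> / 2 * (norm (s i))\<^sup>2)
      + 1 / 2 * (qnorm P (z i - x) + qnorm M (d i))
      \<le> (f xk - f x) - c \<bullet> blkU blk i (xk - x) + 1 / 2 * qnorm P (xk - x)
         - l0 \<bullet> r + \<beta> / 2 * (norm r)\<^sup>2" if im: "i < m" for i
  proof -
    define yi where "yi = xk + blkU blk i (x - xk)"
    have yoff: "\<forall>j. blk j \<noteq> i \<longrightarrow> yi $ j = xk $ j" by (simp add: yi_def)
    have gyi: "g i yi = g i x"
      using g_block im unfolding depends_only_on_block_def by (auto simp: yi_def)
    have argm: "\<forall>v. (\<forall>j. blk j \<noteq> i \<longrightarrow> v $ j = xk $ j) \<longrightarrow>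
        ereal (blkU blk i c \<bullet> z i + qnorm P (z i - xk) / 2) + g i (z i)
        \<le> ereal (blkU blk i c \<bullet> v + qnorm P (v - xk) / 2) + g i v"
      using X_argmin hs_valid im by (simp add: c_def z_def xk_def l0_def r_def)
    have tp: "g i (z i) \<noteq> \<infinity> \<and> blkU blk i c \<bullet> z i + gr i (z i) + (P *v (z i - xk)) \<bullet> (z i - yi)
        \<le> blkU blk i c \<bullet> yi + gr i yi"
      unfolding gr_def
      by (rule three_point[OF _ _ argm zoff[OF im] yoff P_sym])
         (use g_convex gninf im gyi gx_fin in auto)
    have zy: "z i - yi = blkU blk i (z i - x)"
      using zoff[OF im] by (auto simp: vec_eq_iff yi_def)
    have bd: "blkU blk i (d i) = d i" using blkU_supported[OF dsupp[OF im]] .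
    have zy2: "z i - yi = d i + blkU blk i (xk - x)"
      using zoff[OF im] by (auto simp: vec_eq_iff zy d_def)
    have e1: "blkU blk i c \<bullet> z i - blkU blk i c \<bullet> yi = c \<bullet> d i + c \<bullet> blkU blk i (xk - x)"
    proof -
      have "blkU blk i c \<bullet> z i - blkU blk i c \<bullet> yi = c \<bullet> blkU blk i (z i - yi)"
        by (simp add: inner_blkU blkU_diff flip: inner_diff_right)
      also have "\<dots> = c \<bullet> d i + c \<bullet> blkU blk i (xk - x)"
        by (simp add: zy2 blkU_diff blkU_add bd inner_diff_right inner_add_right)
      finally show ?thesis .
    qed
    have Psupp: "\<forall>j. blk j \<noteq> i \<longrightarrow> (P *v d i) $ j = 0"
      by (rule P_supp[OF P_blockdiag dsupp[OF im]])
    have e2: "(P *v d i) \<bullet> (z i - yi) = (P *v d i) \<bullet> (z i - x)"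
      by (simp add: zy inner_blkU[symmetric] blkU_supported[OF Psupp])
    have zx: "z i - x = d i + (xk - x)" by (simp add: d_def)
    have e3: "qnorm P (z i - x) = qnorm P (d i) + 2 * ((P *v d i) \<bullet> (xk - x)) + qnorm P (xk - x)"
      using qnorm_expand[OF P_sym, of "d i" 1 "xk - x"] unfolding zx by simp
    have e4: "(P *v d i) \<bullet> (z i - x) = qnorm P (d i) + (P *v d i) \<bullet> (xk - x)"
      by (simp add: zx inner_add_right qnorm_def inner_commute)
    have e5: "qnorm M (d i) = qnorm P (d i) - Lv i * (norm (d i))\<^sup>2 - \<beta> * (norm (A *v d i))\<^sup>2"
      unfolding M_def qnorm_lin qnorm_AtA qnorm_Lmat[OF dsupp[OF im]] ..
    have e6: "c \<bullet> d i = grad xk \<bullet> d i - (l0 - \<beta> *\<^sub>R r) \<bullet> (A *v d i)"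
      by (simp add: c_def inner_diff_left inner_transpose del: transpose_matrix_vector)
    have desc: "f (z i) \<le> f xk + grad xk \<bullet> d i + Lv i / 2 * (norm (d i))\<^sup>2"
    proof -
      have "f (xk + d i) \<le> f xk + grad xk \<bullet> d i + Lv i / 2 * (norm (d i))\<^sup>2"
      proof (rule descent[OF f_grad])
        fix t :: real assume t: "0 \<le> t" "t \<le> 1"
        have bt: "blkU blk i (t *\<^sub>R d i) = t *\<^sub>R d i" by (simp add: blkU_scale bd)
        have "(grad (xk + t *\<^sub>R d i) - grad xk) \<bullet> d i
              = blkU blk i (grad (xk + t *\<^sub>R d i) - grad xk) \<bullet> d i"
          by (rule inner_blkU_supp[OF dsupp[OF im]])
        also have "\<dots> \<le> norm (blkU blk i (grad (xk + t *\<^sub>R d i) - grad xk)) * norm (d i)"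
          by (rule norm_cauchy_schwarz)
        also have "\<dots> \<le> Lv i * norm (blkU blk i (t *\<^sub>R d i)) * norm (d i)"
          using Lip_i[rule_format, OF im, of xk "t *\<^sub>R d i"] bt
          by (intro mult_right_mono) auto
        also have "\<dots> = Lv i * t * (norm (d i))\<^sup>2"
          using t by (simp add: bt power2_eq_square)
        finally show "(grad (xk + t *\<^sub>R d i) - grad xk) \<bullet> d i \<le> Lv i * t * (norm (d i))\<^sup>2" .
      qed
      then show ?thesis by (simp add: d_def)
    qed
    have dual: "- (ln i \<bullet> s i) + (\<beta> - \<rho>) * (norm (s i))\<^sup>2 - \<beta> / 2 * (norm (s i))\<^sup>2
        - \<beta> / 2 * (norm (A *v d i))\<^sup>2 + (l0 - \<beta> *\<^sub>R r) \<bullet> (A *v d i)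
        = - (l0 \<bullet> r) + \<beta> / 2 * (norm r)\<^sup>2"
      unfolding ln_eq[OF im] s_eq[OF im]
      by (simp add: power2_norm_eq_inner inner_add_left inner_add_right inner_diff_left
          inner_diff_right inner_commute algebra_simps)
    have grx: "gr i yi = gr i x" by (simp add: gr_def gyi)
    have tp': "blkU blk i c \<bullet> z i + gr i (z i) + (P *v d i) \<bullet> (z i - yi)
        \<le> blkU blk i c \<bullet> yi + gr i yi" using tp by (simp add: d_def)
    have "f (z i) - f x + gr i (z i) - gr i x
      + (- (ln i \<bullet> s i) + (\<beta> - \<rho>) * (norm (s i))\<^sup>2 - \<beta> / 2 * (norm (s i))\<^sup>2)
      + 1 / 2 * (qnorm P (z i - x) + qnorm M (d i))
      \<le> (f xk - f x) - c \<bullet> blkU blk i (xk - x) + 1 / 2 * qnorm P (xk - x)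
         - l0 \<bullet> r + \<beta> / 2 * (norm r)\<^sup>2"
    proof -
      define BNa where "BNa = \<beta> * (norm (A *v d i))\<^sup>2"
      define LNd where "LNd = Lv i * (norm (d i))\<^sup>2"
      have e5': "qnorm M (d i) = qnorm P (d i) - LNd - BNa" using e5 by (simp add: BNa_def LNd_def)
      have desc': "f (z i) \<le> f xk + grad xk \<bullet> d i + LNd / 2" using desc by (simp add: LNd_def)
      have dual': "(- (ln i \<bullet> s i) + (\<beta> - \<rho>) * (norm (s i))\<^sup>2 - \<beta> / 2 * (norm (s i))\<^sup>2)
        - BNa / 2 + (l0 - \<beta> *\<^sub>R r) \<bullet> (A *v d i) = - (l0 \<bullet> r) + \<beta> / 2 * (norm r)\<^sup>2"
        using dual by (simp add: BNa_def)
      have h1: "gr i (z i) + (qnorm P (d i) + (P *v d i) \<bullet> (xk - x))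
          \<le> gr i x - (c \<bullet> d i + c \<bullet> blkU blk i (xk - x))"
        using tp' e1 e2 e4 grx by linarith
      have h2: "1 / 2 * (qnorm P (z i - x) + qnorm M (d i))
          = qnorm P (d i) + (P *v d i) \<bullet> (xk - x) + qnorm P (xk - x) / 2 - LNd / 2 - BNa / 2"
        unfolding e3 e5' by simp
      show ?thesis using h1 h2 e6 desc' dual' by linarith
    qed
    then show ?thesis using tp by blast
  qed
  have m_pos: "0 < m" using blk_range by (metis neq0_conv not_less0)
  define E where "E i = f (z i) - f x + gr i (z i) - gr i x
      + (- (ln i \<bullet> s i) + (\<beta> - \<rho>) * (norm (s i))\<^sup>2 - \<beta> / 2 * (norm (s i))\<^sup>2)
      + 1 / 2 * (qnorm P (z i - x) + qnorm M (d i))" for i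
  define K where "K = (f xk - f x) + 1 / 2 * qnorm P (xk - x) - l0 \<bullet> r + \<beta> / 2 * (norm r)\<^sup>2"
  have sumkey: "(\<Sum>i<m. E i) \<le> (real m - 1) * (f xk - f x - l0 \<bullet> r + \<beta> * (norm r)\<^sup>2)
      - real m * \<beta> / 2 * (norm r)\<^sup>2 + real m / 2 * qnorm P (xk - x)"
  proof -
    have "(\<Sum>i<m. E i) \<le> (\<Sum>i<m. K - c \<bullet> blkU blk i (xk - x))"
    proof (rule sum_mono)
      fix i assume "i \<in> {..<m}"
      then have "i < m" by simp
      from key[OF this] show "E i \<le> K - c \<bullet> blkU blk i (xk - x)"
        unfolding E_def K_def by linarith
    qed
    also have "\<dots> = real m * K - c \<bullet> (xk - x)"
      by (simp add: sum_subtractf inner_sum_right[symmetric] sum_blkU[OF blk_range])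
    also have "c \<bullet> (xk - x) = grad xk \<bullet> (xk - x) - (l0 - \<beta> *\<^sub>R r) \<bullet> r"
      by (simp add: c_def inner_diff_left inner_transpose r_eq del: transpose_matrix_vector)
    also have "(l0 - \<beta> *\<^sub>R r) \<bullet> r = l0 \<bullet> r - \<beta> * (norm r)\<^sup>2"
      by (simp add: inner_diff_left power2_norm_eq_inner)
    finally have 1: "(\<Sum>i<m. E i) \<le> real m * K - (grad xk \<bullet> (xk - x) - (l0 \<bullet> r - \<beta> * (norm r)\<^sup>2))" .
    have 2: "f x - f xk \<ge> grad xk \<bullet> (x - xk)" by (rule tangent[OF f_grad f_convex])
    have 3: "grad xk \<bullet> (x - xk) = - (grad xk \<bullet> (xk - x))"
      by (simp add: inner_diff_right)
    show ?thesis using 1 2 3 unfolding K_def by (simp add: algebra_simps)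
  qed
  define Dl where "Dl i = - (ln i \<bullet> s i) + (\<beta> - \<rho>) * (norm (s i))\<^sup>2 - \<beta> / 2 * (norm (s i))\<^sup>2" for i
  define Q where "Q i = qnorm P (z i - x) + qnorm M (d i)" for i
  define N where "N = (norm r)\<^sup>2"
  define Gx where "Gx = (\<Sum>l<m. gr l x)"
  have gzfin: "g i (z i) \<noteq> \<infinity>" if "i < m" for i using key[OF that] by blast
  have gblk: "g l (z i) = g l xk" if "l < m" "i < m" "l \<noteq> i" for l i
    using g_block that zoff[OF that(2)] unfolding depends_only_on_block_def by metis
  have gxE: "g l x = ereal (gr l x)" if "l < m" for l
    using gx_fin[OF that] gninf[OF that] by (cases "g l x") (auto simp: gr_def)
  have gzE: "g i (z i) = ereal (gr i (z i))" if "i < m" for i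
    using gzfin[OF that] gninf[OF that] by (cases "g i (z i)") (auto simp: gr_def)
  have sumgx: "(\<Sum>l<m. g l x) = ereal Gx"
  proof -
    have "(\<Sum>l<m. g l x) = (\<Sum>l<m. ereal (gr l x))" by (rule sum.cong) (auto simp: gxE)
    then show ?thesis by (simp add: Gx_def)
  qed
  have Esum: "(\<Sum>i<m. E i) \<le> (real m - 1) * (f xk - f x - l0 \<bullet> r + \<beta> * N)
      - real m * \<beta> / 2 * N + real m / 2 * qnorm P (xk - x)"
    using sumkey by (simp add: N_def)
  have G: "ereal (1 / real m) *
       (\<Sum>i<m. (ereal (f (z i)) + (\<Sum>l<m. g l (z i))) - (ereal (f x) + (\<Sum>l<m. g l x)) + ereal (Dl i))
     + ereal (1 / 2 * ((1 / real m) * (\<Sum>i<m. Q i)))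
     \<le> ereal (1 - 1 / real m) *
         ((ereal (f xk) + (\<Sum>l<m. g l xk)) - (ereal (f x) + (\<Sum>l<m. g l x))
          + ereal (- (l0 \<bullet> r) + \<beta> * N))
       + ereal (- \<beta> / 2 * N + 1 / 2 * qnorm P (xk - x))"
  proof (cases "\<forall>l<m. g l xk \<noteq> \<infinity>")
    case True
    define Gk where "Gk = (\<Sum>l<m. gr l xk)"
    have gkE: "g l xk = ereal (gr l xk)" if "l < m" for l
      using True that gninf[OF that] by (cases "g l xk") (auto simp: gr_def)
    have sumgk: "(\<Sum>l<m. g l xk) = ereal Gk"
    proof -
      have "(\<Sum>l<m. g l xk) = (\<Sum>l<m. ereal (gr l xk))" by (rule sum.cong) (auto simp: gkE)
      then show ?thesis by (simp add: Gk_def)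
    qed
    have grz: "gr l (z i) = gr l xk" if "l < m" "i < m" "l \<noteq> i" for l i
      using gblk[OF that] by (simp add: gr_def)
    have sumz: "(\<Sum>l<m. g l (z i)) = ereal (gr i (z i) + Gk - gr i xk)" if im: "i < m" for i
    proof -
      have "(\<Sum>l<m. g l (z i)) = ereal (\<Sum>l<m. gr l (z i))"
      proof -
        have "(\<Sum>l<m. g l (z i)) = (\<Sum>l<m. ereal (gr l (z i)))"
        proof (rule sum.cong)
          fix l assume "l \<in> {..<m}"
          then have lm: "l < m" by simp
          show "g l (z i) = ereal (gr l (z i))"
          proof (cases "l = i")
            case True then show ?thesis using gzE[OF im] by simp
          next
            case False then show ?thesis using gblk[OF lm im False] gkE[OF lm] grz[OF lm im False] by simp
          qed
        qed simp
        then show ?thesis by simp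
      qed
      also have "(\<Sum>l<m. gr l (z i)) = (\<Sum>l<m. gr l xk + (if l = i then gr i (z i) - gr i xk else 0))"
        using grz[OF _ im] by (intro sum.cong) auto
      also have "\<dots> = Gk + (gr i (z i) - gr i xk)"
        using im by (simp add: sum.distrib Gk_def)
      finally show ?thesis by simp
    qed
    define LHSr where "LHSr = 1 / real m *
       (\<Sum>i<m. (f (z i) + (gr i (z i) + Gk - gr i xk)) - (f x + Gx) + Dl i)
       + 1 / 2 * ((1 / real m) * (\<Sum>i<m. Q i))"
    define RHSr where "RHSr = (1 - 1 / real m) * ((f xk + Gk) - (f x + Gx) + (- (l0 \<bullet> r) + \<beta> * N))
       + (- \<beta> / 2 * N + 1 / 2 * qnorm P (xk - x))"
    have L: "ereal (1 / real m) *
       (\<Sum>i<m. (ereal (f (z i)) + (\<Sum>l<m. g l (z i))) - (ereal (f x) + (\<Sum>l<m. g l x)) + ereal (Dl i))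
     + ereal (1 / 2 * ((1 / real m) * (\<Sum>i<m. Q i))) = ereal LHSr"
    proof -
      have "(\<Sum>i<m. (ereal (f (z i)) + (\<Sum>l<m. g l (z i))) - (ereal (f x) + (\<Sum>l<m. g l x)) + ereal (Dl i))
        = (\<Sum>i<m. ereal ((f (z i) + (gr i (z i) + Gk - gr i xk)) - (f x + Gx) + Dl i))"
        by (rule sum.cong) (auto simp: sumz sumgx)
      then show ?thesis unfolding LHSr_def by simp
    qed
    have R: "ereal (1 - 1 / real m) *
         ((ereal (f xk) + (\<Sum>l<m. g l xk)) - (ereal (f x) + (\<Sum>l<m. g l x))
          + ereal (- (l0 \<bullet> r) + \<beta> * N))
       + ereal (- \<beta> / 2 * N + 1 / 2 * qnorm P (xk - x)) = ereal RHSr"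
      unfolding RHSr_def by (simp add: sumgk sumgx)
    have S1: "(\<Sum>i<m. (f (z i) + (gr i (z i) + Gk - gr i xk)) - (f x + Gx) + Dl i) + 1 / 2 * (\<Sum>i<m. Q i)
        = (\<Sum>i<m. E i + (Gk - gr i xk) - (Gx - gr i x))"
    proof -
      have "(\<Sum>i<m. (f (z i) + (gr i (z i) + Gk - gr i xk)) - (f x + Gx) + Dl i) + 1 / 2 * (\<Sum>i<m. Q i)
        = (\<Sum>i<m. ((f (z i) + (gr i (z i) + Gk - gr i xk)) - (f x + Gx) + Dl i) + 1 / 2 * Q i)"
        by (simp add: sum.distrib sum_distrib_left)
      also have "\<dots> = (\<Sum>i<m. E i + (Gk - gr i xk) - (Gx - gr i x))"
        by (rule sum.cong) (simp_all add: E_def Dl_def Q_def algebra_simps)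
      finally show ?thesis .
    qed
    have S2: "(\<Sum>i<m. E i + (Gk - gr i xk) - (Gx - gr i x)) = (\<Sum>i<m. E i) + (real m - 1) * (Gk - Gx)"
      by (simp add: sum.distrib sum_subtractf Gk_def Gx_def algebra_simps)
    have "real m * LHSr = (\<Sum>i<m. E i) + (real m - 1) * (Gk - Gx)"
      using m_pos S1 S2 unfolding LHSr_def by (simp add: algebra_simps)
    also have "\<dots> \<le> real m * RHSr"
      using Esum m_pos unfolding RHSr_def by (simp add: algebra_simps)
    finally have "LHSr \<le> RHSr" using m_pos by simp
    then show ?thesis using L R by simp
  next
    case False
    then obtain l where l: "l < m" "g l xk = \<infinity>" by blast
    show ?thesis
    proof (cases "m = 1")
      case False
      then have m2: "0 < 1 - 1 / real m" using m_pos by (simp add: field_simps)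
      have "(\<Sum>l<m. g l xk) = \<infinity>" using l by (auto simp: sum_Pinfty)
      then have "ereal (1 - 1 / real m) *
         ((ereal (f xk) + (\<Sum>l<m. g l xk)) - (ereal (f x) + (\<Sum>l<m. g l x))
          + ereal (- (l0 \<bullet> r) + \<beta> * N))
       + ereal (- \<beta> / 2 * N + 1 / 2 * qnorm P (xk - x)) = \<infinity>" (is "?R = _")
        using m2 \<open>m \<noteq> 1\<close> by (simp add: sumgx ereal_mult_infty)
      show ?thesis unfolding \<open>?R = \<infinity>\<close> by simp
    next
      case True
      have E0: "E 0 \<le> - \<beta> / 2 * N + 1 / 2 * qnorm P (xk - x)"
        using Esum True by simp
      show ?thesis using E0 True gzE[of 0] gxE[of 0]
        by (simp add: E_def Dl_def Q_def Gx_def algebra_simps flip: zero_ereal_def)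
    qed
  qed
  show ?thesis using G unfolding Dl_def Q_def N_def M_def d_def z_def xk_def s_def ln_def r_def l0_def
    by simp
qed


end
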